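(* If $(H,d,\mu,\Delta)$ is a DG bialgebra and $\mu_{1}^{n}\in Hom^{2-n}(H^{\otimes n},H)$, $n\geq 3$, is a 2-cocycle in the Gerstenhaber–Schack complex (i.e. $D(\mu_1^n)=0$), then $(H[[t]],d,\mu,\Delta,t\mu_{1}^{n})$ is a linear deformation of $H_{0}=(H[[t]],d,\mu,\Delta)$ as a Hopf $A(n)$-algebra.
   Context: Let $\mathbf{k}$ be a field and $(H,d,\mu,\Delta)$ a connected DG bialgebra over $\mathbf{k}$ with $|d|=1$. Extending $d,\mu,\Delta$ $\mathbf{k}[[t]]$-linearly gives the $\mathbf{k}[[t]]$-DG bialgebra $H_0=(H[[t]],d,\mu,\Delta)$. Let $\sigma_{r,s}:(H^{\otimes r})^{\otimes s}\to (H^{\otimes s})^{\otimes r}$ be the canonical permutation of tensor factors. The (graded) Gerstenhaber–Schack cochains are $C^r_{GS}(H,H)=\bigoplus_{p+i+j=r+1}Hom^p(H^{\otimes i},H^{\otimes j})$, where $H^{\otimes i}$ carries the bicomodule structure induced by $\mu,\Delta$ and $H^{\otimes j}$ the bimodule structure; the total differential on $f$ of tridegree $(p,i,j)$ is $D(f)=[(-1)^{i+j}d+\partial+(-1)^i\delta](f)$ with $d(f)=d_{(j)}f-(-1)^p f d_{(i)}$, $\partial(f)=\lambda^j(1\otimes f)-f\partial_{(i)}-(-1)^i\rho^j(f\otimes 1)$, $\delta(f)=(1\otimes f)\lambda_i-\delta_{(j)}f-(-1)^j(f\otimes 1)\rho_i$, where $d_{(k)}=\sum_i 1^{\otimes i}\otimes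 d\otimes 1^{\otimes k-i-1}$, $\partial_{(k)}=\sum_i(-1)^i 1^{\otimes i}\otimes\mu\otimes 1^{\otimes k-i-1}$, $\delta_{(k)}=\sum_i(-1)^i1^{\otimes i}\otimes\Delta\otimes1^{\otimes k-i-1}$, and $\lambda_i,\rho_i$ (resp. $\lambda^j,\rho^j$) are the left/right coactions (resp. actions) on the tensor powers. A 2-cocycle is an element of total degree 2 with $D=0$. For $n\geq 3$, a Hopf $A(n)$-algebra is a tuple $(H,d,\mu,\Delta,\mu^n)$ such that (1) $(H,d,\Delta)$ is a coassociative DG coalgebra; (2) $(H,d,\mu,\mu^n)$ is an $A(n)$-algebra, i.e. with $\mu^1=d$, $\mu^2=\mu$, $\mu^n$ and all other $\mu^k=0$ ($\mu^k\in Hom^{2-k}(H^{\otimes k},H)$) one has $\sum_{j=0}^{k-1}\sum_{i=0}^{k-j-1}(-1)^{j(i+1)}\mu^{k-j}(1^{\otimes i}\otimes\mu^{j+1}\otimes 1^{\otimes k-j-1-i})=0$ for each $k<n+1$; and (3) $\Delta\mu^n=[\mu(\mu\otimes 1)\cdots(\mu\otimes 1^{\otimes n-2})\otimes\mu^n+\mu^n\otimes\mu(1\otimes\mu)\cdots(1^{\otimes n-2}\otimes\mu)]\sigma_{2,n}\Delta^{\otimes n}$. A linear deformation is one in which the deformed structure maps are polynomials of degree at most 1 in $t$ (here only $\mu^n_t=t\mu_1^n$ is added). *)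

theory Defs
  imports Main "HOL-Computational_Algebra.Formal_Power_Series"
begin

text \<open>
A graded module is given by a homogeneous basis indexed by a type 'b with a
degree function deg :: 'b => int.  The tensor power of order m has as basis the words
(lists) of basis elements of length m, of degree the sum of the degrees.  A linear map from
the i-th to the j-th tensor power is represented by its matrix f w u (coefficient of the output
basis word u in the image of the input basis word w).  Over the field k the scalars are of
type 'k; the k[[t]]-linear extensions have matrix entries in 'k fps.
\<close>

type_synonym ('b, 'r) lmap = "'b list \<Rightarrow> 'b list \<Rightarrow> 'r"

definition degw :: "('b \<Rightarrow> int) \<Rightarrow> 'b list \<Rightarrow> int" where
  "degw deg w = sum_list (map deg w)"

definition ksign :: "int \<Rightarrow> 'r::comm_ring_1" where
  "ksign k = (if even k then 1 else - 1)"

definition is_hom :: "('b \<Rightarrow> int) \<Rightarrow> int \<Rightarrow> nat \<Rightarrow> nat \<Rightarrow> ('b, 'r::comm_ring_1) lmap \<Rightarrow> bool" where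
  "is_hom deg p i j f \<longleftrightarrow>
     (\<forall>w u. f w u \<noteq> 0 \<longrightarrow> length w = i \<and> length u = j \<and> degw deg u = degw deg w + p) \<and>
     (\<forall>w. finite {u. f w u \<noteq> 0})"

definition lzero :: "('b, 'r::comm_ring_1) lmap" where
  "lzero = (\<lambda>w u. 0)"

definition ladd :: "('b, 'r::comm_ring_1) lmap \<Rightarrow> ('b, 'r) lmap \<Rightarrow> ('b, 'r) lmap" where
  "ladd f g = (\<lambda>w u. f w u + g w u)"

definition lsub :: "('b, 'r::comm_ring_1) lmap \<Rightarrow> ('b, 'r) lmap \<Rightarrow> ('b, 'r) lmap" where
  "lsub f g = (\<lambda>w u. f w u - g w u)"

definition lscale :: "'r::comm_ring_1 \<Rightarrow> ('b, 'r) lmap \<Rightarrow> ('b, 'r) lmap" where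
  "lscale c f = (\<lambda>w u. c * f w u)"

definition lsum :: "'i set \<Rightarrow> ('i \<Rightarrow> ('b, 'r::comm_ring_1) lmap) \<Rightarrow> ('b, 'r) lmap" where
  "lsum I F = (\<lambda>w u. \<Sum>x\<in>I. F x w u)"

text \<open>Composition: lcomp g f is g o f (f applied first).\<close>
definition lcomp :: "('b, 'r::comm_ring_1) lmap \<Rightarrow> ('b, 'r) lmap \<Rightarrow> ('b, 'r) lmap" where
  "lcomp g f = (\<lambda>w u. \<Sum>v\<in>{v. f w v \<noteq> 0}. f w v * g v u)"

definition idm :: "nat \<Rightarrow> ('b, 'r::comm_ring_1) lmap" where
  "idm m = (\<lambda>w u. if w = u \<and> length w = m then 1 else 0)"

text \<open>Tensor product of maps with the Koszul sign convention
  (f \<otimes> g)(x \<otimes> y) = (-1)^(|g| |x|) f(x) \<otimes> g(y);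
  f goes from the i1-th to the j1-th tensor power, pg is the degree of g.\<close>
definition ltens :: "('b \<Rightarrow> int) \<Rightarrow> nat \<Rightarrow> nat \<Rightarrow> ('b, 'r::comm_ring_1) lmap \<Rightarrow> int \<Rightarrow> ('b, 'r) lmap
     \<Rightarrow> ('b, 'r) lmap" where
  "ltens deg i1 j1 f pg g = (\<lambda>w u.
      ksign (pg * degw deg (take i1 w)) * f (take i1 w) (take j1 u) * g (drop i1 w) (drop j1 u))"

definition place :: "('b \<Rightarrow> int) \<Rightarrow> nat \<Rightarrow> nat \<Rightarrow> ('b, 'r::comm_ring_1) lmap \<Rightarrow> nat \<Rightarrow> nat \<Rightarrow> int
     \<Rightarrow> ('b, 'r) lmap" where
  "place deg l m g a b pg = ltens deg l l (idm l) pg (ltens deg a b g 0 (idm m))"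

fun tpow :: "('b \<Rightarrow> int) \<Rightarrow> nat \<Rightarrow> nat \<Rightarrow> ('b, 'r::comm_ring_1) lmap \<Rightarrow> nat \<Rightarrow> ('b, 'r) lmap" where
  "tpow deg a b g 0 = idm 0"
| "tpow deg a b g (Suc m) = ltens deg a b g 0 (tpow deg a b g m)"

text \<open>Permutation of tensor factors with Koszul sign: output position k receives input
  position prm k (prm a permutation of the positions below N).\<close>
definition permap :: "('b \<Rightarrow> int) \<Rightarrow> nat \<Rightarrow> (nat \<Rightarrow> nat) \<Rightarrow> ('b, 'r::comm_ring_1) lmap" where
  "permap deg N prm = (\<lambda>w u.
     if length w = N \<and> u = map (\<lambda>k. w ! prm k) [0..<N]
     then ksign (\<Sum>(k, l)\<in>{(k, l). k < l \<and> l < N \<and> prm l < prm k}. deg (w ! prm k) * deg (w ! prm l))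
     else 0)"

text \<open>sigma_{r,s} : (H^{\<otimes> r})^{\<otimes> s} \<rightarrow> (H^{\<otimes> s})^{\<otimes> r}.  Input position a*r+b (a<s, b<r)
  goes to output position b*s+a.\<close>
definition sigma :: "('b \<Rightarrow> int) \<Rightarrow> nat \<Rightarrow> nat \<Rightarrow> ('b, 'r::comm_ring_1) lmap" where
  "sigma deg r s = permap deg (r * s) (\<lambda>k. (k mod s) * r + k div s)"

fun muL :: "('b \<Rightarrow> int) \<Rightarrow> ('b, 'r::comm_ring_1) lmap \<Rightarrow> nat \<Rightarrow> ('b, 'r) lmap" where
  "muL deg mu 0 = lzero"
| "muL deg mu (Suc 0) = idm 1"
| "muL deg mu (Suc (Suc m)) = lcomp (muL deg mu (Suc m)) (ltens deg 2 1 mu 0 (idm m))"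

fun muR :: "('b \<Rightarrow> int) \<Rightarrow> ('b, 'r::comm_ring_1) lmap \<Rightarrow> nat \<Rightarrow> ('b, 'r) lmap" where
  "muR deg mu 0 = lzero"
| "muR deg mu (Suc 0) = idm 1"
| "muR deg mu (Suc (Suc m)) = lcomp (muR deg mu (Suc m)) (ltens deg m m (idm m) 0 mu)"

fun dIter :: "('b \<Rightarrow> int) \<Rightarrow> ('b, 'r::comm_ring_1) lmap \<Rightarrow> nat \<Rightarrow> ('b, 'r) lmap" where
  "dIter deg Delta 0 = lzero"
| "dIter deg Delta (Suc 0) = idm 1"
| "dIter deg Delta (Suc (Suc m)) = lcomp (ltens deg 1 2 Delta 0 (idm m)) (dIter deg Delta (Suc m))"

text \<open>Bimodule structure on H^{\<otimes> j}: left / right actions.\<close>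
definition lam_act :: "('b \<Rightarrow> int) \<Rightarrow> ('b, 'r::comm_ring_1) lmap \<Rightarrow> ('b, 'r) lmap \<Rightarrow> nat \<Rightarrow> ('b, 'r) lmap" where
  "lam_act deg mu Delta j =
     lcomp (tpow deg 2 1 mu j) (lcomp (sigma deg j 2) (ltens deg 1 j (dIter deg Delta j) 0 (idm j)))"

definition rho_act :: "('b \<Rightarrow> int) \<Rightarrow> ('b, 'r::comm_ring_1) lmap \<Rightarrow> ('b, 'r) lmap \<Rightarrow> nat \<Rightarrow> ('b, 'r) lmap" where
  "rho_act deg mu Delta j =
     lcomp (tpow deg 2 1 mu j) (lcomp (sigma deg j 2) (ltens deg j j (idm j) 0 (dIter deg Delta j)))"

text \<open>Bicomodule structure on H^{\<otimes> i}: left / right coactions.\<close>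
definition lam_co :: "('b \<Rightarrow> int) \<Rightarrow> ('b, 'r::comm_ring_1) lmap \<Rightarrow> ('b, 'r) lmap \<Rightarrow> nat \<Rightarrow> ('b, 'r) lmap" where
  "lam_co deg mu Delta i =
     lcomp (ltens deg i 1 (muL deg mu i) 0 (idm i)) (lcomp (sigma deg 2 i) (tpow deg 1 2 Delta i))"

definition rho_co :: "('b \<Rightarrow> int) \<Rightarrow> ('b, 'r::comm_ring_1) lmap \<Rightarrow> ('b, 'r) lmap \<Rightarrow> nat \<Rightarrow> ('b, 'r) lmap" where
  "rho_co deg mu Delta i =
     lcomp (ltens deg i i (idm i) 0 (muL deg mu i)) (lcomp (sigma deg 2 i) (tpow deg 1 2 Delta i))"

definition d_k :: "('b \<Rightarrow> int) \<Rightarrow> ('b, 'r::comm_ring_1) lmap \<Rightarrow> nat \<Rightarrow> ('b, 'r) lmap" where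
  "d_k deg d k = lsum {0..<k} (\<lambda>l. place deg l (k - l - 1) d 1 1 1)"

definition partial_k :: "('b \<Rightarrow> int) \<Rightarrow> ('b, 'r::comm_ring_1) lmap \<Rightarrow> nat \<Rightarrow> ('b, 'r) lmap" where
  "partial_k deg mu k = lsum {0..<k} (\<lambda>l. lscale (ksign (int l)) (place deg l (k - l - 1) mu 2 1 0))"

definition delta_k :: "('b \<Rightarrow> int) \<Rightarrow> ('b, 'r::comm_ring_1) lmap \<Rightarrow> nat \<Rightarrow> ('b, 'r) lmap" where
  "delta_k deg Delta k = lsum {0..<k} (\<lambda>l. lscale (ksign (int l)) (place deg l (k - l - 1) Delta 1 2 0))"

definition GS_d :: "('b \<Rightarrow> int) \<Rightarrow> ('b, 'r::comm_ring_1) lmap \<Rightarrow> int \<Rightarrow> nat \<Rightarrow> nat \<Rightarrow> ('b, 'r) lmap \<Rightarrow> ('b, 'r) lmap" where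
  "GS_d deg d p i j f = lsub (lcomp (d_k deg d j) f) (lscale (ksign p) (lcomp f (d_k deg d i)))"

definition GS_partial :: "('b \<Rightarrow> int) \<Rightarrow> ('b, 'r::comm_ring_1) lmap \<Rightarrow> ('b, 'r) lmap
    \<Rightarrow> int \<Rightarrow> nat \<Rightarrow> nat \<Rightarrow> ('b, 'r) lmap \<Rightarrow> ('b, 'r) lmap" where
  "GS_partial deg mu Delta p i j f =
     lsub (lsub (lcomp (lam_act deg mu Delta j) (ltens deg 1 1 (idm 1) p f))
                (lcomp f (partial_k deg mu i)))
          (lscale (ksign (int i)) (lcomp (rho_act deg mu Delta j) (ltens deg i j f 0 (idm 1))))"

definition GS_delta :: "('b \<Rightarrow> int) \<Rightarrow> ('b, 'r::comm_ring_1) lmap \<Rightarrow> ('b, 'r) lmap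
    \<Rightarrow> int \<Rightarrow> nat \<Rightarrow> nat \<Rightarrow> ('b, 'r) lmap \<Rightarrow> ('b, 'r) lmap" where
  "GS_delta deg mu Delta p i j f =
     lsub (lsub (lcomp (ltens deg 1 1 (idm 1) p f) (lam_co deg mu Delta i))
                (lcomp (delta_k deg Delta j) f))
          (lscale (ksign (int j)) (lcomp (ltens deg i j f 0 (idm 1)) (rho_co deg mu Delta i)))"

definition is_GS_cochain :: "('b \<Rightarrow> int) \<Rightarrow> int \<Rightarrow> (int \<Rightarrow> nat \<Rightarrow> nat \<Rightarrow> ('b, 'r::comm_ring_1) lmap) \<Rightarrow> bool" where
  "is_GS_cochain deg r c \<longleftrightarrow>
     (\<forall>p i j. c p i j \<noteq> lzero \<longrightarrow> p + int i + int j = r + 1 \<and> i \<ge> 1 \<and> j \<ge> 1) \<and>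
     (\<forall>p i j. is_hom deg p i j (c p i j)) \<and>
     finite {(p, i, j). c p i j \<noteq> lzero}"

text \<open>Total differential D = (-1)^{i+j} d + \<partial> + (-1)^i \<delta> (signs from the source tridegree).\<close>
definition GS_D :: "('b \<Rightarrow> int) \<Rightarrow> ('b, 'r::comm_ring_1) lmap \<Rightarrow> ('b, 'r) lmap \<Rightarrow> ('b, 'r) lmap
    \<Rightarrow> (int \<Rightarrow> nat \<Rightarrow> nat \<Rightarrow> ('b, 'r) lmap) \<Rightarrow> (int \<Rightarrow> nat \<Rightarrow> nat \<Rightarrow> ('b, 'r) lmap)" where
  "GS_D deg d mu Delta c = (\<lambda>p i j.
     ladd (ladd (lscale (ksign (int i + int j)) (GS_d deg d (p - 1) i j (c (p - 1) i j)))
                (if i \<ge> 1 then GS_partial deg mu Delta p (i - 1) j (c p (i - 1) j) else lzero))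
          (if j \<ge> 1 then lscale (ksign (int i)) (GS_delta deg mu Delta p i (j - 1) (c p i (j - 1)))
           else lzero))"

definition single_cochain :: "int \<Rightarrow> nat \<Rightarrow> nat \<Rightarrow> ('b, 'r::comm_ring_1) lmap
    \<Rightarrow> (int \<Rightarrow> nat \<Rightarrow> nat \<Rightarrow> ('b, 'r) lmap)" where
  "single_cochain p i j f = (\<lambda>p' i' j'. if p' = p \<and> i' = i \<and> j' = j then f else lzero)"

definition is_GS_2cocycle :: "('b \<Rightarrow> int) \<Rightarrow> ('b, 'r::comm_ring_1) lmap \<Rightarrow> ('b, 'r) lmap \<Rightarrow> ('b, 'r) lmap
    \<Rightarrow> (int \<Rightarrow> nat \<Rightarrow> nat \<Rightarrow> ('b, 'r) lmap) \<Rightarrow> bool" where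
  "is_GS_2cocycle deg d mu Delta c \<longleftrightarrow>
     is_GS_cochain deg 2 c \<and> GS_D deg d mu Delta c = (\<lambda>p i j. lzero)"

text \<open>Connected DG bialgebra (H, d, mu, Delta) with some unit eta and counit eps.
  H^{\<otimes> 0} is the ground ring with basis the empty word.\<close>
definition dg_bialgebra :: "('b \<Rightarrow> int) \<Rightarrow> ('b, 'r::comm_ring_1) lmap \<Rightarrow> ('b, 'r) lmap \<Rightarrow> ('b, 'r) lmap \<Rightarrow> bool" where
  "dg_bialgebra deg d mu Delta \<longleftrightarrow> (\<exists>eta eps.
     is_hom deg 1 1 1 d \<and> is_hom deg 0 2 1 mu \<and> is_hom deg 0 1 2 Delta \<and>
     is_hom deg 0 0 1 eta \<and> is_hom deg 0 1 0 eps \<and>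
     lcomp d d = lzero \<and>
     lcomp mu (ltens deg 2 1 mu 0 (idm 1)) = lcomp mu (ltens deg 1 1 (idm 1) 0 mu) \<and>
     lcomp mu (ltens deg 0 1 eta 0 (idm 1)) = idm 1 \<and>
     lcomp mu (ltens deg 1 1 (idm 1) 0 eta) = idm 1 \<and>
     lcomp (ltens deg 1 2 Delta 0 (idm 1)) Delta = lcomp (ltens deg 1 1 (idm 1) 0 Delta) Delta \<and>
     lcomp (ltens deg 1 0 eps 0 (idm 1)) Delta = idm 1 \<and>
     lcomp (ltens deg 1 1 (idm 1) 0 eps) Delta = idm 1 \<and>
     lcomp d mu = lcomp mu (d_k deg d 2) \<and>
     lcomp Delta d = lcomp (d_k deg d 2) Delta \<and>
     lcomp d eta = lzero \<and> lcomp eps d = lzero \<and>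
     lcomp Delta mu = lcomp (ltens deg 2 1 mu 0 mu) (lcomp (sigma deg 2 2) (ltens deg 1 2 Delta 0 Delta)) \<and>
     lcomp Delta eta = ltens deg 0 1 eta 0 eta \<and>
     lcomp eps mu = ltens deg 1 0 eps 0 eps \<and>
     lcomp eps eta = idm 0)"

definition connected_dg_bialgebra :: "('b \<Rightarrow> int) \<Rightarrow> ('b, 'k::field) lmap \<Rightarrow> ('b, 'k) lmap \<Rightarrow> ('b, 'k) lmap \<Rightarrow> bool" where
  "connected_dg_bialgebra deg d mu Delta \<longleftrightarrow>
     dg_bialgebra deg d mu Delta \<and> (\<forall>b. deg b \<ge> 0) \<and> card {b. deg b = 0} = 1"

definition mu_family :: "nat \<Rightarrow> ('b, 'r::comm_ring_1) lmap \<Rightarrow> ('b, 'r) lmap \<Rightarrow> ('b, 'r) lmap \<Rightarrow> nat \<Rightarrow> ('b, 'r) lmap" where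
  "mu_family n d mu mun k = (if k = 1 then d else if k = 2 then mu else if k = n then mun else lzero)"

definition An_algebra :: "('b \<Rightarrow> int) \<Rightarrow> nat \<Rightarrow> ('b, 'r::comm_ring_1) lmap \<Rightarrow> ('b, 'r) lmap \<Rightarrow> ('b, 'r) lmap \<Rightarrow> bool" where
  "An_algebra deg n d mu mun \<longleftrightarrow>
     is_hom deg 1 1 1 d \<and> is_hom deg 0 2 1 mu \<and> is_hom deg (2 - int n) n 1 mun \<and>
     (\<forall>k. 1 \<le> k \<and> k < n + 1 \<longrightarrow>
        lsum {0..<k} (\<lambda>j. lsum {0..<k - j} (\<lambda>i.
           lscale (ksign (int j * (int i + 1)))
             (lcomp (mu_family n d mu mun (k - j))
                    (place deg i (k - j - 1 - i) (mu_family n d mu mun (j + 1)) (j + 1) 1 (1 - int j)))))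
        = lzero)"

definition dg_coalgebra :: "('b \<Rightarrow> int) \<Rightarrow> ('b, 'r::comm_ring_1) lmap \<Rightarrow> ('b, 'r) lmap \<Rightarrow> bool" where
  "dg_coalgebra deg d Delta \<longleftrightarrow>
     is_hom deg 1 1 1 d \<and> is_hom deg 0 1 2 Delta \<and>
     lcomp d d = lzero \<and>
     lcomp (ltens deg 1 2 Delta 0 (idm 1)) Delta = lcomp (ltens deg 1 1 (idm 1) 0 Delta) Delta \<and>
     lcomp Delta d = lcomp (d_k deg d 2) Delta"

definition hopf_An :: "('b \<Rightarrow> int) \<Rightarrow> nat \<Rightarrow> ('b, 'r::comm_ring_1) lmap \<Rightarrow> ('b, 'r) lmap \<Rightarrow> ('b, 'r) lmap
    \<Rightarrow> ('b, 'r) lmap \<Rightarrow> bool" where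
  "hopf_An deg n d mu Delta mun \<longleftrightarrow>
     n \<ge> 3 \<and> dg_coalgebra deg d Delta \<and> An_algebra deg n d mu mun \<and>
     lcomp Delta mun =
       lcomp (ladd (ltens deg n 1 (muL deg mu n) (2 - int n) mun) (ltens deg n 1 mun 0 (muR deg mu n)))
             (lcomp (sigma deg 2 n) (tpow deg 1 2 Delta n))"

definition text_ext :: "('b, 'k::field) lmap \<Rightarrow> ('b, 'k fps) lmap" where
  "text_ext f = (\<lambda>w u. fps_const (f w u))"

definition lin_in_t :: "('b, 'k::field fps) lmap \<Rightarrow> bool" where
  "lin_in_t f \<longleftrightarrow> (\<forall>w u m. m \<ge> 2 \<longrightarrow> fps_nth (f w u) m = 0)"

definition reduces_to :: "('b, 'k::field fps) lmap \<Rightarrow> ('b, 'k fps) lmap \<Rightarrow> bool" where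
  "reduces_to ft f0 \<longleftrightarrow> (\<forall>w u. fps_nth (ft w u) 0 = fps_nth (f0 w u) 0)"

definition linear_deformation_hopf_An :: "('b \<Rightarrow> int) \<Rightarrow> nat
    \<Rightarrow> ('b, 'k::field fps) lmap \<Rightarrow> ('b, 'k fps) lmap \<Rightarrow> ('b, 'k fps) lmap \<Rightarrow> ('b, 'k fps) lmap
    \<Rightarrow> ('b, 'k fps) lmap \<Rightarrow> ('b, 'k fps) lmap \<Rightarrow> ('b, 'k fps) lmap \<Rightarrow> ('b, 'k fps) lmap \<Rightarrow> bool" where
  "linear_deformation_hopf_An deg n d0 mu0 Delta0 mun0 dt mut Deltat munt \<longleftrightarrow>
     hopf_An deg n d0 mu0 Delta0 mun0 \<and> hopf_An deg n dt mut Deltat munt \<and>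
     lin_in_t dt \<and> lin_in_t mut \<and> lin_in_t Deltat \<and> lin_in_t munt \<and>
     reduces_to dt d0 \<and> reduces_to mut mu0 \<and> reduces_to Deltat Delta0 \<and> reduces_to munt mun0"

end

theory Submission
  imports Defs
begin


definition rowfin :: "('b, 'r::comm_ring_1) lmap \<Rightarrow> bool" where
  "rowfin f \<longleftrightarrow> (\<forall>w. finite {u. f w u \<noteq> 0})"

lemma is_hom_rowfin: "is_hom deg p i j f \<Longrightarrow> rowfin f"
  by (simp add: is_hom_def rowfin_def)

lemma ksign_add: "ksign (a + b) = (ksign a * ksign b :: 'r::comm_ring_1)"
  by (auto simp: ksign_def)
lemma ksign_0[simp]: "ksign 0 = 1" by (simp add: ksign_def)
lemma ksign_1[simp]: "ksign 1 = -1" by (simp add: ksign_def)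
lemma ksign_sq: "ksign k * ksign k = (1::'r::comm_ring_1)" by (simp add: ksign_def)
lemma ksign_ne0: "ksign k \<noteq> (0::'r::comm_ring_1)" by (simp add: ksign_def)

lemma lcomp_lzero_right[simp]: "lcomp g lzero = lzero"
  by (simp add: lcomp_def lzero_def)
lemma lcomp_lzero_left[simp]: "lcomp lzero f = lzero"
  by (simp add: lcomp_def lzero_def)
lemma ltens_lzero1[simp]: "ltens deg a b lzero q h = lzero"
  by (simp add: ltens_def lzero_def)
lemma ltens_lzero2[simp]: "ltens deg a b g q lzero = lzero"
  by (simp add: ltens_def lzero_def)
lemma place_lzero[simp]: "place deg l m lzero a b q = lzero"
  by (simp add: place_def)
lemma lscale_lzero[simp]: "lscale c lzero = lzero"
  by (simp add: lscale_def lzero_def)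

lemma lcomp_superset:
  assumes "finite S" "{v. f w v \<noteq> 0} \<subseteq> S"
  shows "lcomp g f w u = (\<Sum>v\<in>S. f w v * g v u)"
  unfolding lcomp_def
  by (rule sum.mono_neutral_left) (use assms in auto)

lemma lcomp_single:
  assumes "finite {v. f w v \<noteq> 0}" "\<And>v. f w v \<noteq> 0 \<Longrightarrow> g v u \<noteq> 0 \<Longrightarrow> v = v0"
  shows "lcomp g f w u = f w v0 * g v0 u"
proof -
  have "lcomp g f w u = (\<Sum>v\<in>insert v0 {v. f w v \<noteq> 0}. f w v * g v u)"
    by (rule lcomp_superset) (use assms in auto)
  also have "\<dots> = (\<Sum>v\<in>{v0}. f w v * g v u)"
  proof (rule sum.mono_neutral_right)
    show "\<forall>v\<in>insert v0 {v. f w v \<noteq> 0} - {v0}. f w v * g v u = 0"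
    proof
      fix v assume "v \<in> insert v0 {v. f w v \<noteq> 0} - {v0}"
      then have "v \<noteq> v0" by auto
      then show "f w v * g v u = 0" using assms(2)[of v] by fastforce
    qed
  qed (use assms in auto)
  finally show ?thesis by simp
qed

lemma rowfin_lcomp:
  assumes "rowfin f" "rowfin g" shows "rowfin (lcomp g f)"
  unfolding rowfin_def
proof
  fix w
  have "{u. lcomp g f w u \<noteq> 0} \<subseteq> (\<Union>v\<in>{v. f w v \<noteq> 0}. {u. g v u \<noteq> 0})"
  proof
    fix u assume "u \<in> {u. lcomp g f w u \<noteq> 0}"
    then have "(\<Sum>v\<in>{v. f w v \<noteq> 0}. f w v * g v u) \<noteq> 0" by (simp add: lcomp_def)
    then obtain v where "v \<in> {v. f w v \<noteq> 0}" "f w v * g v u \<noteq> 0"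
      using sum.not_neutral_contains_not_neutral by blast
    then show "u \<in> (\<Union>v\<in>{v. f w v \<noteq> 0}. {u. g v u \<noteq> 0})" by auto
  qed
  moreover have "finite (\<Union>v\<in>{v. f w v \<noteq> 0}. {u. g v u \<noteq> 0})"
    using assms by (auto simp: rowfin_def)
  ultimately show "finite {u. lcomp g f w u \<noteq> 0}" by (rule finite_subset)
qed

lemma rowfin_ltens:
  assumes "rowfin g" "rowfin h" shows "rowfin (ltens deg a b g q h)"
  unfolding rowfin_def
proof
  fix w
  have "{u. ltens deg a b g q h w u \<noteq> 0} \<subseteq>
     (\<lambda>(x, y). x @ y) ` ({x. g (take a w) x \<noteq> 0} \<times> {y. h (drop a w) y \<noteq> 0})"
  proof
    fix u assume "u \<in> {u. ltens deg a b g q h w u \<noteq> 0}"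
    then have "g (take a w) (take b u) \<noteq> 0" "h (drop a w) (drop b u) \<noteq> 0"
      by (auto simp: ltens_def)
    then show "u \<in> (\<lambda>(x, y). x @ y) ` ({x. g (take a w) x \<noteq> 0} \<times> {y. h (drop a w) y \<noteq> 0})"
      by (intro image_eqI[where x="(take b u, drop b u)"]) auto
  qed
  moreover have "finite ((\<lambda>(x, y). x @ y) ` ({x. g (take a w) x \<noteq> 0} \<times> {y. h (drop a w) y \<noteq> 0}))"
    using assms by (auto simp: rowfin_def)
  ultimately show "finite {u. ltens deg a b g q h w u \<noteq> 0}" by (rule finite_subset)
qed

lemma rowfin_idm: "rowfin (idm m :: ('b, 'r::comm_ring_1) lmap)"
proof -
  have "\<And>w. {u. idm m w u \<noteq> (0::'r)} \<subseteq> {w}" by (auto simp: idm_def)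
  then show ?thesis unfolding rowfin_def using finite_subset by blast
qed

lemma rowfin_lzero: "rowfin lzero" by (simp add: rowfin_def lzero_def)

lemma rowfin_place: "rowfin g \<Longrightarrow> rowfin (place deg l m g a b q)"
  by (simp add: place_def rowfin_ltens rowfin_idm)

lemma rowfin_tpow: "rowfin g \<Longrightarrow> rowfin (tpow deg a b g m)"
  by (induct m) (auto simp: rowfin_idm rowfin_ltens)

lemma rowfin_permap: "rowfin (permap deg N prm :: ('b, 'r::comm_ring_1) lmap)"
proof -
  have "\<And>w. {u. permap deg N prm w u \<noteq> (0::'r)} \<subseteq> {map (\<lambda>k. w ! prm k) [0..<N]}"
    by (auto simp: permap_def)
  then show ?thesis unfolding rowfin_def using finite_subset by blast
qed

lemma rowfin_sigma: "rowfin (sigma deg r s)"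
  by (simp add: sigma_def rowfin_permap)

lemma lcomp_assoc:
  assumes f: "rowfin f" and h: "rowfin h"
  shows "lcomp g (lcomp f h) = lcomp (lcomp g f) h"
proof (intro ext)
  fix w u
  define Sh where "Sh = {x. h w x \<noteq> 0}"
  define V where "V = (\<Union>x\<in>Sh. {v. f x v \<noteq> 0})"
  have fSh: "finite Sh" using h by (simp add: rowfin_def Sh_def)
  have fV: "finite V" using f fSh by (simp add: rowfin_def V_def)
  have sub: "{v. lcomp f h w v \<noteq> 0} \<subseteq> V"
  proof
    fix v assume "v \<in> {v. lcomp f h w v \<noteq> 0}"
    then have "(\<Sum>x\<in>Sh. h w x * f x v) \<noteq> 0" by (simp add: lcomp_def Sh_def)
    then obtain x where "x \<in> Sh" "h w x * f x v \<noteq> 0"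
      using sum.not_neutral_contains_not_neutral by blast
    moreover have "f x v \<noteq> 0" proof assume "f x v = 0" with \<open>h w x * f x v \<noteq> 0\<close> show False by simp qed
    ultimately show "v \<in> V" by (auto simp: V_def)
  qed
  have "lcomp g (lcomp f h) w u = (\<Sum>v\<in>V. lcomp f h w v * g v u)"
    using fV sub by (rule lcomp_superset)
  also have "\<dots> = (\<Sum>v\<in>V. \<Sum>x\<in>Sh. h w x * f x v * g v u)"
    by (simp add: lcomp_def Sh_def sum_distrib_right)
  also have "\<dots> = (\<Sum>x\<in>Sh. \<Sum>v\<in>V. h w x * f x v * g v u)"
    by (rule sum.swap)
  also have "\<dots> = (\<Sum>x\<in>Sh. h w x * lcomp g f x u)"
  proof (rule sum.cong[OF refl])
    fix x assume x: "x \<in> Sh"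
    have "lcomp g f x u = (\<Sum>v\<in>V. f x v * g v u)"
      by (rule lcomp_superset[OF fV]) (use x in \<open>auto simp: V_def\<close>)
    then show "(\<Sum>v\<in>V. h w x * f x v * g v u) = h w x * lcomp g f x u"
      by (simp add: sum_distrib_left mult.assoc)
  qed
  also have "\<dots> = lcomp (lcomp g f) h w u" by (simp add: lcomp_def Sh_def)
  finally show "lcomp g (lcomp f h) w u = lcomp (lcomp g f) h w u" .
qed

lemma lcomp_lsum_right:
  assumes "finite I" "\<And>i. i \<in> I \<Longrightarrow> rowfin (F i)"
  shows "lcomp g (lsum I F) w u = (\<Sum>i\<in>I. lcomp g (F i) w u)"
proof -
  define V where "V = (\<Union>i\<in>I. {v. F i w v \<noteq> 0})"
  have fV: "finite V" using assms by (auto simp: V_def rowfin_def)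
  have sub: "{v. lsum I F w v \<noteq> 0} \<subseteq> V"
  proof
    fix v assume "v \<in> {v. lsum I F w v \<noteq> 0}"
    then have "(\<Sum>i\<in>I. F i w v) \<noteq> 0" by (simp add: lsum_def)
    then obtain i where "i \<in> I" "F i w v \<noteq> 0"
      using sum.not_neutral_contains_not_neutral by blast
    then show "v \<in> V" by (auto simp: V_def)
  qed
  have "lcomp g (lsum I F) w u = (\<Sum>v\<in>V. lsum I F w v * g v u)"
    using fV sub by (rule lcomp_superset)
  also have "\<dots> = (\<Sum>v\<in>V. \<Sum>i\<in>I. F i w v * g v u)"
    by (simp add: lsum_def sum_distrib_right)
  also have "\<dots> = (\<Sum>i\<in>I. \<Sum>v\<in>V. F i w v * g v u)" by (rule sum.swap)
  also have "\<dots> = (\<Sum>i\<in>I. lcomp g (F i) w u)"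
  proof (rule sum.cong[OF refl])
    fix i assume "i \<in> I"
    then show "(\<Sum>v\<in>V. F i w v * g v u) = lcomp g (F i) w u"
      by (intro lcomp_superset[OF fV, symmetric]) (auto simp: V_def)
  qed
  finally show ?thesis .
qed

lemma ltens_idm0_left: "ltens deg 0 0 (idm 0) q g = g"
  by (intro ext) (simp add: ltens_def idm_def degw_def)

lemma ltens_idm0_right:
  assumes "is_hom deg p a b g" shows "ltens deg a b g 0 (idm 0) = g"
proof (intro ext)
  fix w u
  show "ltens deg a b g 0 (idm 0) w u = g w u"
  proof (cases "g w u = 0")
    case False
    then have "length w = a" "length u = b" using assms by (auto simp: is_hom_def)
    then show ?thesis by (simp add: ltens_def idm_def)
  next
    case True
    then show ?thesis by (auto simp: ltens_def idm_def)
  qed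
qed

lemma place00: "is_hom deg p a b g \<Longrightarrow> place deg 0 0 g a b q = g"
  by (simp add: place_def ltens_idm0_left ltens_idm0_right)

lemma is_hom_idm: "is_hom deg 0 m m (idm m)"
  by (auto simp: is_hom_def idm_def rowfin_idm[unfolded rowfin_def])

lemma degw_append: "degw deg (x @ y) = degw deg x + degw deg y"
  by (simp add: degw_def)

lemma is_hom_ltens:
  assumes g: "is_hom deg p1 a b g" and h: "is_hom deg p2 c e h"
  shows "is_hom deg (p1 + p2) (a + c) (b + e) (ltens deg a b g q h)"
proof -
  have "rowfin (ltens deg a b g q h)"
    using g h by (intro rowfin_ltens) (auto intro: is_hom_rowfin)
  moreover
  have "length w = a + c \<and> length u = b + e \<and> degw deg u = degw deg w + (p1 + p2)"
    if nz: "ltens deg a b g q h w u \<noteq> 0" for w u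
  proof -
    from nz have g1: "g (take a w) (take b u) \<noteq> 0" and h1: "h (drop a w) (drop b u) \<noteq> 0"
      by (auto simp: ltens_def)
    from g g1 have A: "length (take a w) = a \<and> length (take b u) = b \<and>
      degw deg (take b u) = degw deg (take a w) + p1"
      using g unfolding is_hom_def by (meson g1)
    from h h1 have B: "length (drop a w) = c \<and> length (drop b u) = e \<and>
      degw deg (drop b u) = degw deg (drop a w) + p2"
      using h unfolding is_hom_def by (meson h1)
    have "degw deg u = degw deg (take b u) + degw deg (drop b u)"
      by (metis append_take_drop_id degw_append)
    moreover have "degw deg w = degw deg (take a w) + degw deg (drop a w)"
      by (metis append_take_drop_id degw_append)
    ultimately show ?thesis using A B by auto
  qed
  ultimately show ?thesis by (auto simp: is_hom_def rowfin_def)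
qed

lemma is_hom_lcomp:
  assumes f: "is_hom deg p a b f" and g: "is_hom deg q b c g"
  shows "is_hom deg (p + q) a c (lcomp g f)"
proof -
  have "rowfin (lcomp g f)" using f g by (intro rowfin_lcomp) (auto intro: is_hom_rowfin)
  moreover
  have "length w = a \<and> length u = c \<and> degw deg u = degw deg w + (p + q)"
    if nz: "lcomp g f w u \<noteq> 0" for w u
  proof -
    from nz have "(\<Sum>v\<in>{v. f w v \<noteq> 0}. f w v * g v u) \<noteq> 0" by (simp add: lcomp_def)
    then obtain v where "f w v * g v u \<noteq> 0"
      using sum.not_neutral_contains_not_neutral by blast
    then have "f w v \<noteq> 0" "g v u \<noteq> 0" by auto
    then show ?thesis using f g by (auto simp: is_hom_def)
  qed
  ultimately show ?thesis by (auto simp: is_hom_def rowfin_def)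
qed

lemma is_hom_muL: "is_hom deg 0 2 1 mu \<Longrightarrow> is_hom deg 0 (Suc m) 1 (muL deg mu (Suc m))"
proof (induct m)
  case 0 then show ?case by (simp add: is_hom_idm)
next
  case (Suc m)
  have "is_hom deg (0 + 0) (2 + m) (1 + m) (ltens deg 2 1 mu 0 (idm m))"
    by (rule is_hom_ltens[OF Suc(2) is_hom_idm])
  then have "is_hom deg (0 + 0) (Suc (Suc m)) 1 (lcomp (muL deg mu (Suc m)) (ltens deg 2 1 mu 0 (idm m)))"
    using Suc by (intro is_hom_lcomp) auto
  then show ?case by simp
qed

lemma is_hom_muR: "is_hom deg 0 2 1 mu \<Longrightarrow> is_hom deg 0 (Suc m) 1 (muR deg mu (Suc m))"
proof (induct m)
  case 0 then show ?case by (simp add: is_hom_idm)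
next
  case (Suc m)
  have "is_hom deg (0 + 0) (m + 2) (m + 1) (ltens deg m m (idm m) 0 mu)"
    by (rule is_hom_ltens[OF is_hom_idm Suc(2)])
  then have "is_hom deg (0 + 0) (Suc (Suc m)) 1 (lcomp (muR deg mu (Suc m)) (ltens deg m m (idm m) 0 mu))"
    using Suc by (intro is_hom_lcomp) auto
  then show ?case by simp
qed



lemma rowfin_ltens_hom: "is_hom deg p a b g \<Longrightarrow> rowfin h \<Longrightarrow> finite {v. ltens deg a b g q h w v \<noteq> 0}"
  by (metis is_hom_rowfin rowfin_def rowfin_ltens)
lemma rowfin_ltens_hom2: "rowfin g \<Longrightarrow> is_hom deg p a b h \<Longrightarrow> finite {v. ltens deg c e g q h w v \<noteq> 0}"
  by (metis is_hom_rowfin rowfin_def rowfin_ltens)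

lemma lcomp_idm_left:
  assumes g: "is_hom deg p a b g" shows "lcomp (idm b) g = g"
proof (intro ext)
  fix w u
  have fin: "finite {v. g w v \<noteq> 0}" using g by (simp add: is_hom_def)
  have "lcomp (idm b) g w u = g w u * idm b u u"
    by (rule lcomp_single) (use fin in \<open>auto simp: idm_def split: if_splits\<close>)
  also have "\<dots> = g w u" using g by (cases "g w u = 0") (auto simp: idm_def is_hom_def)
  finally show "lcomp (idm b) g w u = g w u" .
qed

lemma idm1_nil[simp]: "idm 1 x [] = 0" by (simp add: idm_def)

lemma interchange1:
  assumes M: "is_hom deg 0 n 1 M" and f: "is_hom deg p n 1 f"
  shows "lcomp (ltens deg 1 1 (idm 1) p f) (ltens deg n 1 M 0 (idm n)) = ltens deg n 1 M p f"
proof (intro ext)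
  fix w u
  have fin: "finite {v. ltens deg n 1 M 0 (idm n) w v \<noteq> 0}"
    by (rule rowfin_ltens_hom[OF M rowfin_idm])
  have "lcomp (ltens deg 1 1 (idm 1) p f) (ltens deg n 1 M 0 (idm n)) w u =
     ltens deg n 1 M 0 (idm n) w (take 1 u @ drop n w) * ltens deg 1 1 (idm 1) p f (take 1 u @ drop n w) u"
  proof (rule lcomp_single[rotated])
    fix v assume a: "ltens deg n 1 M 0 (idm n) w v \<noteq> 0" "ltens deg 1 1 (idm 1) p f v u \<noteq> 0"
    from a(1) have "drop 1 v = drop n w" by (auto simp: ltens_def idm_def split: if_splits)
    moreover from a(2) have "take 1 v = take 1 u" by (auto simp: ltens_def idm_def split: if_splits)
    ultimately show "v = take 1 u @ drop n w" by (metis append_take_drop_id)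
  qed (rule fin)
  also have "\<dots> = ltens deg n 1 M p f w u"
  proof (cases u)
    case Nil
    have "M (take n w) [] = 0" using M unfolding is_hom_def by force
    then have "ltens deg n 1 M p f w u = 0" using Nil by (simp add: ltens_def)
    moreover have "ltens deg 1 1 (idm 1) p f (take 1 u @ drop n w) u = 0"
    proof -
      show ?thesis using Nil unfolding ltens_def by (simp del: One_nat_def)
    qed
    ultimately show ?thesis by simp
  next
    case (Cons a u')
    show ?thesis
    proof (cases "M (take n w) [a] = 0 \<or> f (drop n w) u' = 0")
      case True then show ?thesis using Cons by (auto simp: ltens_def idm_def)
    next
      case False
      then have "length (drop n w) = n \<and> degw deg [a] = degw deg (take n w)"
        using M f unfolding is_hom_def by (metis add_0_right)
      then show ?thesis using Cons by (simp add: ltens_def idm_def mult_ac)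
    qed
  qed
  finally show "lcomp (ltens deg 1 1 (idm 1) p f) (ltens deg n 1 M 0 (idm n)) w u = ltens deg n 1 M p f w u" .
qed

lemma interchange2:
  assumes M: "is_hom deg 0 n 1 M" and f: "is_hom deg p n 1 f"
  shows "lcomp (ltens deg n 1 f 0 (idm 1)) (ltens deg n n (idm n) 0 M) = ltens deg n 1 f 0 M"
proof (intro ext)
  fix w u
  have fin: "finite {v. ltens deg n n (idm n) 0 M w v \<noteq> 0}"
    by (rule rowfin_ltens_hom2[OF rowfin_idm M])
  have "lcomp (ltens deg n 1 f 0 (idm 1)) (ltens deg n n (idm n) 0 M) w u =
     ltens deg n n (idm n) 0 M w (take n w @ drop 1 u) * ltens deg n 1 f 0 (idm 1) (take n w @ drop 1 u) u"
  proof (rule lcomp_single[rotated])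
    fix v assume a: "ltens deg n n (idm n) 0 M w v \<noteq> 0" "ltens deg n 1 f 0 (idm 1) v u \<noteq> 0"
    from a(1) have "take n v = take n w" by (auto simp: ltens_def idm_def split: if_splits)
    moreover from a(2) have "drop n v = drop 1 u" by (auto simp: ltens_def idm_def split: if_splits)
    ultimately show "v = take n w @ drop 1 u" by (metis append_take_drop_id)
  qed (rule fin)
  also have "\<dots> = ltens deg n 1 f 0 M w u"
  proof (cases "length (take n w) = n")
    case False
    have "f (take n w) (take 1 u) = 0" using f False unfolding is_hom_def by blast
    then show ?thesis using False by (simp add: ltens_def idm_def)
  next
    case True
    show ?thesis
    proof (cases "M (drop n w) (drop 1 u) = 0")
      case True2: True
      then show ?thesis using True by (simp add: ltens_def idm_def)
    next
      case False
      then have "length (drop 1 u) = 1" using M unfolding is_hom_def by blast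
      then show ?thesis using True by (simp add: ltens_def idm_def mult_ac)
    qed
  qed
  finally show "lcomp (ltens deg n 1 f 0 (idm 1)) (ltens deg n n (idm n) 0 M) w u = ltens deg n 1 f 0 M w u" .
qed

lemma interchange3:
  assumes mu: "is_hom deg 0 2 1 mu"
  shows "lcomp (ltens deg (Suc k) (Suc k) (idm (Suc k)) 0 mu) (ltens deg 2 1 mu 0 (idm (Suc (Suc k)))) =
         lcomp (ltens deg 2 1 mu 0 (idm (Suc k))) (ltens deg (Suc (Suc k)) (Suc (Suc k)) (idm (Suc (Suc k))) 0 mu)"
  (is "?L = ?R")
proof (intro ext)
  fix w u
  have h1: "is_hom deg 0 (Suc (Suc (Suc (Suc k)))) (Suc (Suc (Suc k))) (ltens deg 2 1 mu 0 (idm (Suc (Suc k))))"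
    using is_hom_ltens[OF mu is_hom_idm, of "Suc (Suc k)"] by simp
  have h2: "is_hom deg 0 (Suc (Suc (Suc k))) (Suc (Suc k)) (ltens deg (Suc k) (Suc k) (idm (Suc k)) 0 mu)"
    using is_hom_ltens[OF is_hom_idm mu, of "Suc k"] by simp
  have h3: "is_hom deg 0 (Suc (Suc (Suc (Suc k)))) (Suc (Suc (Suc k))) (ltens deg (Suc (Suc k)) (Suc (Suc k)) (idm (Suc (Suc k))) 0 mu)"
    using is_hom_ltens[OF is_hom_idm mu, of "Suc (Suc k)"] by simp
  have h4: "is_hom deg 0 (Suc (Suc (Suc k))) (Suc (Suc k)) (ltens deg 2 1 mu 0 (idm (Suc k)))"
    using is_hom_ltens[OF mu is_hom_idm, of "Suc k"] by simp
  have hL: "is_hom deg (0 + 0) (Suc (Suc (Suc (Suc k)))) (Suc (Suc k)) ?L"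
    by (rule is_hom_lcomp[OF h1 h2])
  have hR: "is_hom deg (0 + 0) (Suc (Suc (Suc (Suc k)))) (Suc (Suc k)) ?R"
    by (rule is_hom_lcomp[OF h3 h4])
  show "?L w u = ?R w u"
  proof (cases "length w = Suc (Suc (Suc (Suc k))) \<and> length u = Suc (Suc k)")
    case False
    then have "?L w u = 0" "?R w u = 0" using hL hR by (auto simp: is_hom_def)
    then show ?thesis by simp
  next
    case True
    then obtain x1 x2 wr s ur where w: "w = x1 # x2 # wr" and u: "u = s # ur"
      and lw: "length wr = Suc (Suc k)" and lu: "length ur = Suc k"
      by (metis Suc_length_conv)
    have finA: "finite {v. ltens deg 2 1 mu 0 (idm (Suc (Suc k))) w v \<noteq> 0}"
      by (rule rowfin_ltens_hom[OF mu rowfin_idm])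
    have finC: "finite {v. ltens deg (Suc (Suc k)) (Suc (Suc k)) (idm (Suc (Suc k))) 0 mu w v \<noteq> 0}"
      by (rule rowfin_ltens_hom2[OF rowfin_idm mu])
    have L: "?L w u = ltens deg 2 1 mu 0 (idm (Suc (Suc k))) w (s # wr) *
                ltens deg (Suc k) (Suc k) (idm (Suc k)) 0 mu (s # wr) u"
    proof (rule lcomp_single[rotated])
      fix v assume a: "ltens deg 2 1 mu 0 (idm (Suc (Suc k))) w v \<noteq> 0"
        "ltens deg (Suc k) (Suc k) (idm (Suc k)) 0 mu v u \<noteq> 0"
      from a(1) have "drop 1 v = wr" using w by (auto simp: ltens_def idm_def split: if_splits)
      moreover from a(2) have "take (Suc k) v = take (Suc k) u" by (auto simp: ltens_def idm_def split: if_splits)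
      then have "take 1 v = [s]" using u by (metis take_take min_def Suc_le_mono le0 take_Suc_Cons take0 One_nat_def)
      ultimately show "v = s # wr" by (metis append_take_drop_id append_Cons append_Nil)
    qed (rule finA)
    have R: "?R w u = ltens deg (Suc (Suc k)) (Suc (Suc k)) (idm (Suc (Suc k))) 0 mu w (x1 # x2 # ur) *
                ltens deg 2 1 mu 0 (idm (Suc k)) (x1 # x2 # ur) u"
    proof (rule lcomp_single[rotated])
      fix v assume a: "ltens deg (Suc (Suc k)) (Suc (Suc k)) (idm (Suc (Suc k))) 0 mu w v \<noteq> 0"
        "ltens deg 2 1 mu 0 (idm (Suc k)) v u \<noteq> 0"
      from a(1) have "take (Suc (Suc k)) v = take (Suc (Suc k)) w" by (auto simp: ltens_def idm_def split: if_splits)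
      then have "take 2 v = [x1, x2]" using w by (metis take_take min_def Suc_le_mono le0 take_Suc_Cons take0 numeral_2_eq_2)
      moreover from a(2) have "drop 2 v = ur" using u by (auto simp: ltens_def idm_def split: if_splits)
      ultimately show "v = x1 # x2 # ur" by (metis append_take_drop_id append_Cons append_Nil)
    qed (rule finC)
    show ?thesis unfolding L R using lw lu w u
      by (simp add: ltens_def idm_def numeral_2_eq_2 mult_ac)
  qed
qed

lemma muL_step:
  assumes mu: "is_hom deg 0 2 1 mu"
    and assoc: "lcomp mu (ltens deg 2 1 mu 0 (idm 1)) = lcomp mu (ltens deg 1 1 (idm 1) 0 mu)"
  shows "muL deg mu (Suc (Suc m)) = lcomp (muL deg mu (Suc m)) (ltens deg m m (idm m) 0 mu)"
proof (induct m)
  case 0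
  have e: "ltens deg 2 (Suc 0) mu 0 (idm 0) = mu" using ltens_idm0_right[OF mu] by simp
  show ?case by (simp add: ltens_idm0_left e)
next
  case (Suc m)
  show ?case
  proof (cases m)
    case 0
    have e: "ltens deg 2 (Suc 0) mu 0 (idm 0) = mu" using ltens_idm0_right[OF mu] by simp
    have e2: "lcomp (idm (Suc 0)) mu = mu" using lcomp_idm_left[OF mu] by simp
    have "muL deg mu (Suc (Suc 0)) = mu"
      by (simp add: e e2)
    then show ?thesis using 0 assoc by (simp add: numeral_2_eq_2)
  next
    case (Suc k)
    have rf1: "rowfin (ltens deg m m (idm m) 0 mu)" by (intro rowfin_ltens rowfin_idm is_hom_rowfin[OF mu])
    have rf2: "rowfin (ltens deg 2 1 mu 0 (idm (Suc m)))" by (intro rowfin_ltens rowfin_idm is_hom_rowfin[OF mu])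
    have rf3: "rowfin (ltens deg 2 1 mu 0 (idm m))" by (intro rowfin_ltens rowfin_idm is_hom_rowfin[OF mu])
    have rf4: "rowfin (ltens deg (Suc m) (Suc m) (idm (Suc m)) 0 mu)" by (intro rowfin_ltens rowfin_idm is_hom_rowfin[OF mu])
    have "muL deg mu (Suc (Suc (Suc m))) = lcomp (muL deg mu (Suc (Suc m))) (ltens deg 2 1 mu 0 (idm (Suc m)))"
      by simp
    also have "\<dots> = lcomp (lcomp (muL deg mu (Suc m)) (ltens deg m m (idm m) 0 mu)) (ltens deg 2 1 mu 0 (idm (Suc m)))"
      using Suc.hyps by simp
    also have "\<dots> = lcomp (muL deg mu (Suc m)) (lcomp (ltens deg m m (idm m) 0 mu) (ltens deg 2 1 mu 0 (idm (Suc m))))"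
      by (rule lcomp_assoc[OF rf1 rf2, symmetric])
    also have "\<dots> = lcomp (muL deg mu (Suc m)) (lcomp (ltens deg 2 1 mu 0 (idm m)) (ltens deg (Suc m) (Suc m) (idm (Suc m)) 0 mu))"
      using interchange3[OF mu, of k] Suc by simp
    also have "\<dots> = lcomp (lcomp (muL deg mu (Suc m)) (ltens deg 2 1 mu 0 (idm m))) (ltens deg (Suc m) (Suc m) (idm (Suc m)) 0 mu)"
      by (rule lcomp_assoc[OF rf3 rf4])
    also have "\<dots> = lcomp (muL deg mu (Suc (Suc m))) (ltens deg (Suc m) (Suc m) (idm (Suc m)) 0 mu)"
      by simp
    finally show ?thesis .
  qed
qed

lemma muL_eq_muR:
  assumes mu: "is_hom deg 0 2 1 mu"
    and assoc: "lcomp mu (ltens deg 2 1 mu 0 (idm 1)) = lcomp mu (ltens deg 1 1 (idm 1) 0 mu)"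
  shows "muL deg mu m = muR deg mu m"
proof -
  have "muL deg mu m = muR deg mu m \<and> muL deg mu (Suc m) = muR deg mu (Suc m)"
  proof (induct m)
    case 0 then show ?case by simp
  next
    case (Suc m)
    then show ?case using muL_step[OF mu assoc, of m] by simp
  qed
  then show ?thesis by simp
qed



lemma lsub_lzero[simp]: "lsub lzero lzero = lzero" by (simp add: lsub_def lzero_def)
lemma ladd_lzero[simp]: "ladd f lzero = f" "ladd lzero f = f" by (simp_all add: ladd_def lzero_def)

lemma GS_d_lzero[simp]: "GS_d deg d p i j lzero = lzero" by (simp add: GS_d_def)
lemma GS_partial_lzero[simp]: "GS_partial deg mu Delta p i j lzero = lzero" by (simp add: GS_partial_def)
lemma GS_delta_lzero[simp]: "GS_delta deg mu Delta p i j lzero = lzero" by (simp add: GS_delta_def)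

lemma ksign_cancel: "ksign k * x = (0::'r::comm_ring_1) \<Longrightarrow> x = 0"
  by (metis ksign_sq mult.assoc mult_1 mult_zero_right)

lemma d_k1: "is_hom deg p 1 1 d \<Longrightarrow> d_k deg d 1 = d"
  by (simp add: d_k_def lsum_def place00)
lemma delta_k1: "is_hom deg p 1 2 Delta \<Longrightarrow> delta_k deg Delta 1 = Delta"
  by (simp add: delta_k_def lsum_def lscale_def place00)

lemma cocycle_d:
  assumes n: "n \<ge> 3" and cc: "is_GS_2cocycle deg d mu Delta (single_cochain (2 - int n) n 1 f)"
  shows "lcomp (d_k deg d 1) f = lscale (ksign (2 - int n)) (lcomp f (d_k deg d n))"
proof -
  define c where "c = single_cochain (2 - int n) n 1 f"
  have H: "GS_D deg d mu Delta c (3 - int n) n 1 = lzero" using cc by (simp add: is_GS_2cocycle_def c_def)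
  have c1: "c (3 - int n - 1) n 1 = f" by (simp add: c_def single_cochain_def)
  have c2: "c (3 - int n) (n - 1) 1 = lzero" by (simp add: c_def single_cochain_def)
  have c3: "c (3 - int n) n 0 = lzero" by (simp add: c_def single_cochain_def)
  have "lscale (ksign (int n + int 1)) (GS_d deg d (3 - int n - 1) n 1 f) = lzero"
    using H n unfolding GS_D_def by (simp add: c_def single_cochain_def)
  then have "lscale (ksign (int n + 1)) (GS_d deg d (2 - int n) n 1 f) = lzero"
    by (simp add: algebra_simps)
  then have "\<And>w u. ksign (int n + 1) * (lcomp (d_k deg d 1) f w u - ksign (2 - int n) * lcomp f (d_k deg d n) w u) = 0"
    by (simp add: GS_d_def lsub_def lscale_def lzero_def fun_eq_iff)
  then show ?thesis
    by (intro ext) (simp add: lscale_def, metis ksign_cancel eq_iff_diff_eq_0)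
qed

lemma cocycle_delta:
  assumes n: "n \<ge> 3" and cc: "is_GS_2cocycle deg d mu Delta (single_cochain (2 - int n) n 1 f)"
  shows "lcomp (delta_k deg Delta 1) f =
    ladd (lcomp (ltens deg 1 1 (idm 1) (2 - int n) f) (lam_co deg mu Delta n))
         (lcomp (ltens deg n 1 f 0 (idm 1)) (rho_co deg mu Delta n))"
proof -
  define c where "c = single_cochain (2 - int n) n 1 f"
  have H: "GS_D deg d mu Delta c (2 - int n) n 2 = lzero" using cc by (simp add: is_GS_2cocycle_def c_def)
  have c1: "c (2 - int n) n (2 - 1) = f" by (simp add: c_def single_cochain_def)
  have c2: "c (2 - int n) (n - 1) 2 = lzero" by (simp add: c_def single_cochain_def)
  have c3: "c (2 - int n - 1) n 2 = lzero" by (simp add: c_def single_cochain_def)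
  have "lscale (ksign (int n)) (GS_delta deg mu Delta (2 - int n) n (2 - 1) f) = lzero"
    using H n unfolding GS_D_def by (simp add: c_def single_cochain_def)
  then have "\<And>w u. ksign (int n) * (GS_delta deg mu Delta (2 - int n) n 1 f w u) = 0"
    by (simp add: lscale_def lzero_def fun_eq_iff)
  then have "\<And>w u. GS_delta deg mu Delta (2 - int n) n 1 f w u = 0"
    by (rule ksign_cancel)
  then show ?thesis
    by (intro ext) (simp add: GS_delta_def lsub_def lscale_def ladd_def algebra_simps)
qed

lemma lcomp_ladd_left: "lcomp (ladd A B) S = ladd (lcomp A S) (lcomp B S)"
  by (intro ext) (simp add: lcomp_def ladd_def sum.distrib algebra_simps)

definition hopfS where "hopfS deg Delta n = lcomp (sigma deg 2 n) (tpow deg 1 2 Delta n)"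

lemma hopf_base:
  assumes n: "n \<ge> 3" and cc: "is_GS_2cocycle deg d mu Delta (single_cochain (2 - int n) n 1 f)"
    and f: "is_hom deg (2 - int n) n 1 f"
    and mu: "is_hom deg 0 2 1 mu" and De: "is_hom deg 0 1 2 Delta"
    and assoc: "lcomp mu (ltens deg 2 1 mu 0 (idm 1)) = lcomp mu (ltens deg 1 1 (idm 1) 0 mu)"
  shows "lcomp Delta f = lcomp (ladd (ltens deg n 1 (muL deg mu n) (2 - int n) f) (ltens deg n 1 f 0 (muR deg mu n)))
             (lcomp (sigma deg 2 n) (tpow deg 1 2 Delta n))"
proof -
  define S where "S = lcomp (sigma deg 2 n) (tpow deg 1 2 Delta n)"
  have rS: "rowfin S" unfolding S_def
    by (intro rowfin_lcomp rowfin_tpow rowfin_sigma is_hom_rowfin[OF De])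
  have M: "is_hom deg 0 n 1 (muL deg mu n)"
    using is_hom_muL[OF mu, of "n - 1"] n by simp
  have rL: "rowfin (ltens deg n 1 (muL deg mu n) 0 (idm n))"
    by (intro rowfin_ltens rowfin_idm is_hom_rowfin[OF M])
  have rR: "rowfin (ltens deg n n (idm n) 0 (muL deg mu n))"
    by (intro rowfin_ltens rowfin_idm is_hom_rowfin[OF M])
  have "lcomp Delta f = ladd (lcomp (ltens deg 1 1 (idm 1) (2 - int n) f) (lcomp (ltens deg n 1 (muL deg mu n) 0 (idm n)) S))
         (lcomp (ltens deg n 1 f 0 (idm 1)) (lcomp (ltens deg n n (idm n) 0 (muL deg mu n)) S))"
    using cocycle_delta[OF n cc] delta_k1[OF De] by (simp add: lam_co_def rho_co_def S_def)
  also have "\<dots> = ladd (lcomp (ltens deg n 1 (muL deg mu n) (2 - int n) f) S) (lcomp (ltens deg n 1 f 0 (muL deg mu n)) S)"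
    by (simp only: lcomp_assoc[OF rL rS] lcomp_assoc[OF rR rS] interchange1[OF M f] interchange2[OF M f])
  also have "\<dots> = lcomp (ladd (ltens deg n 1 (muL deg mu n) (2 - int n) f) (ltens deg n 1 f 0 (muR deg mu n))) S"
    by (simp add: lcomp_ladd_left muL_eq_muR[OF mu assoc])
  finally show ?thesis by (simp add: S_def)
qed



lemma lzero_app[simp]: "lzero w u = 0" by (simp add: lzero_def)

lemma lcomp_dk:
  assumes "is_hom deg p 1 1 d"
  shows "lcomp g (d_k deg d m) w u = (\<Sum>l\<in>{0..<m}. lcomp g (place deg l (m - l - 1) d 1 1 1) w u)"
  unfolding d_k_def
  by (rule lcomp_lsum_right) (auto intro: rowfin_place is_hom_rowfin[OF assms])

lemma An_generic:
  fixes d mu mun :: "('b, 'r::comm_ring_1) lmap"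
  assumes n: "n \<ge> 3" and hd: "is_hom deg 1 1 1 d" and hmu: "is_hom deg 0 2 1 mu"
    and hmun: "is_hom deg (2 - int n) n 1 mun"
    and dd: "lcomp d d = lzero"
    and dmu: "lcomp d mu = lcomp mu (d_k deg d 2)"
    and assoc: "lcomp mu (ltens deg 2 1 mu 0 (idm 1)) = lcomp mu (ltens deg 1 1 (idm 1) 0 mu)"
    and Hn: "ladd (lcomp mun (d_k deg d n)) (lscale (ksign (int n - 1)) (lcomp d mun)) = lzero"
  shows "An_algebra deg n d mu mun"
proof -
  define M where "M = mu_family n d mu mun"
  have M1: "M 1 = d" by (simp add: M_def mu_family_def)
  have M1s: "M (Suc 0) = d" by (simp add: M_def mu_family_def)
  have M2: "M 2 = mu" by (simp add: M_def mu_family_def)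
  have Mn: "M n = mun" using n by (simp add: M_def mu_family_def)
  have Mz: "\<And>k. k \<noteq> 1 \<Longrightarrow> k \<noteq> 2 \<Longrightarrow> k \<noteq> n \<Longrightarrow> M k = lzero" by (simp add: M_def mu_family_def)
  define T where "T k j i w u = ksign (int j * (int i + 1)) *
      lcomp (M (k - j)) (place deg i (k - j - 1 - i) (M (j + 1)) (j + 1) 1 (1 - int j)) w u" for k j i w u
  have Tz: "T k j i w u = 0" if "M (k - j) = lzero \<or> M (j + 1) = lzero" for k j i w u
    using that by (auto simp: T_def)
  have Hn': "lcomp mun (d_k deg d n) w u + ksign (int n - 1) * lcomp d mun w u = 0" for w u
    using Hn by (simp add: ladd_def lscale_def lzero_def fun_eq_iff)
  have dd': "lcomp d d w u = 0" for w u using dd by (simp add: lzero_def fun_eq_iff)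
  have dmu': "lcomp d mu w u = lcomp mu (d_k deg d 2) w u" for w u using dmu by simp
  have assoc': "lcomp mu (ltens deg 2 1 mu 0 (idm 1)) w u = lcomp mu (ltens deg 1 1 (idm 1) 0 mu) w u" for w u
    using assoc by simp
  have p00n: "place deg 0 0 mun n (Suc 0) q = mun" for q using place00[OF hmun] by simp
  have p00d: "place deg 0 0 d (Suc 0) (Suc 0) q = d" for q using place00[OF hd] by simp
  have p00mu: "place deg 0 0 mu 2 (Suc 0) q = mu" for q using place00[OF hmu] by simp
  have M2s: "M (Suc (Suc 0)) = mu" by (simp add: M_def mu_family_def)
  have p00mus: "place deg 0 0 mu (Suc (Suc 0)) (Suc 0) q = mu" for q using place00[OF hmu] by (simp add: numeral_2_eq_2)
  have pl01: "place deg 0 1 mu 2 1 0 = ltens deg 2 1 mu 0 (idm 1)"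
    by (simp add: place_def ltens_idm0_left)
  have pl10: "place deg 1 0 mu 2 1 0 = ltens deg 1 1 (idm 1) 0 mu"
    unfolding place_def ltens_idm0_right[OF hmu] ..
  have pl01s: "place deg 0 (Suc 0) mu 2 (Suc 0) 0 = ltens deg 2 (Suc 0) mu 0 (idm (Suc 0))" using pl01 by simp
  have pl10s: "place deg (Suc 0) 0 mu 2 (Suc 0) 0 = ltens deg (Suc 0) (Suc 0) (idm (Suc 0)) 0 mu" using pl10 by simp
  have G0: "(\<Sum>i\<in>{0..<k}. T k 0 i w u) = lcomp (M k) (d_k deg d k) w u" for k w u
    unfolding lcomp_dk[OF hd] T_def by (intro sum.cong) (auto simp: M1s)
  have Glast: "(\<Sum>i\<in>{0..<k - (k - 1)}. T k (k - 1) i w u) = ksign (int k - 1) * lcomp d (M k) w u"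
    if "k \<ge> 3" "k = n" for k w u
  proof -
    have "{0..<k - (k - 1)} = {0}" using that by auto
    moreover have "k - (k - 1) = 1" "k - 1 + 1 = k" "int (k - 1) = int k - 1" using that by auto
    moreover have "1 - (int k - 1) = 2 - int k" by simp
    ultimately show ?thesis using that by (simp add: T_def M1 M1s Mn place00[OF hmun] p00n)
  qed
  have G1: "(\<Sum>i\<in>{0..<3 - 1}. T 3 1 i w u) = 0" for w u
  proof -
    have e: "(3::nat) - 1 = 2" "(3::nat) - 1 - 1 - 0 = 1" "(3::nat) - 1 - 1 - 1 = 0" "(1::nat) + 1 = 2" "1 - int 1 = 0" by auto
    have t0: "T 3 1 0 w u = - lcomp mu (ltens deg 2 1 mu 0 (idm 1)) w u"
      unfolding T_def e M2 pl01 by (simp add: ksign_def pl01s)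
    have t1: "T 3 1 1 w u = lcomp mu (ltens deg 1 1 (idm 1) 0 mu) w u"
      unfolding T_def e M2 pl10 by (simp add: ksign_def pl10s)
    have "{0..<3 - 1} = {0, 1::nat}" by auto
    then have "(\<Sum>i\<in>{0..<3 - 1}. T 3 1 i w u) = T 3 1 0 w u + T 3 1 1 w u" by simp
    then show ?thesis using assoc'[of w u] t0 t1 by simp
  qed
  have G1s: "(\<Sum>i = 0..<2. T 3 (Suc 0) i w u) = 0" for w u using G1[of w u] by simp
  have rel: "lsum {0..<k} (\<lambda>j. lsum {0..<k - j} (\<lambda>i. lscale (ksign (int j * (int i + 1)))
            (lcomp (M (k - j)) (place deg i (k - j - 1 - i) (M (j + 1)) (j + 1) 1 (1 - int j))))) = lzero"
    if k: "1 \<le> k" "k < n + 1" for k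
  proof (intro ext)
    fix w u
    have "lsum {0..<k} (\<lambda>j. lsum {0..<k - j} (\<lambda>i. lscale (ksign (int j * (int i + 1)))
            (lcomp (M (k - j)) (place deg i (k - j - 1 - i) (M (j + 1)) (j + 1) 1 (1 - int j))))) w u
       = (\<Sum>j\<in>{0..<k}. \<Sum>i\<in>{0..<k - j}. T k j i w u)"
      by (simp add: lsum_def lscale_def T_def)
    also have "\<dots> = 0"
    proof -
      consider "k = 1" | "k = 2" | "k = 3" | "k \<ge> 4" "k < n" | "k \<ge> 4" "k = n" using k by linarith
      then show ?thesis
      proof cases
        case 1
        then show ?thesis using dd' by (simp add: T_def M1 M1s place00[OF hd] p00d)
      next
        case 2
        have e: "{0..<2::nat} = {0, 1}" by auto
        show ?thesis using 2 dmu'[of w u] lcomp_dk[OF hd, of mu 2 w u]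
          by (simp add: e T_def M1 M1s M2 M2s place00[OF hmu] p00mu p00mus)
      next
        case 3
        have e: "{0..<3::nat} = {0, 1, 2}" by auto
        have "(\<Sum>j\<in>{0..<k}. \<Sum>i\<in>{0..<k - j}. T k j i w u) =
            (\<Sum>i\<in>{0..<3}. T 3 0 i w u) + (\<Sum>i\<in>{0..<3 - 1}. T 3 1 i w u) + (\<Sum>i\<in>{0..<3 - 2}. T 3 2 i w u)"
          using 3 by (simp add: e)
        also have "\<dots> = lcomp (M 3) (d_k deg d 3) w u + T 3 2 0 w u"
        proof -
          have "{0..<3 - 2::nat} = {0}" by auto
          then show ?thesis unfolding G0 G1 by simp
        qed
        also have "\<dots> = 0"
        proof (cases "n = 3")
          case True
          have M3: "M 3 = mun" using Mn True by simp
          have hmun3: "is_hom deg (2 - int 3) 3 1 mun" using hmun True by simp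
          have e3: "(3::nat) - 2 = 1" "(2::nat) + 1 = 3" "(3::nat) - 2 - 1 - 0 = 0" by auto
          have T2: "T 3 2 0 w u = lcomp d mun w u"
          proof -
            have p3: "place deg 0 0 mun 3 (Suc 0) q = mun" for q using place00[OF hmun3] by simp
            show ?thesis unfolding T_def e3 M1 M3 place00[OF hmun3] by (simp add: ksign_def p3)
          qed
          have "ksign (int 3 - 1) = (1::'r)" by (simp add: ksign_def)
          then show ?thesis using Hn'[of w u] True T2 M3 by simp
        next
          case False
          then have "M 3 = lzero" by (intro Mz) auto
          then show ?thesis by (simp add: T_def)
        qed
        finally show ?thesis .
      next
        case 4
        show ?thesis
        proof (rule sum.neutral, rule ballI)
          fix j assume j: "j \<in> {0..<k}"
          have "M (k - j) = lzero \<or> M (j + 1) = lzero"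
          proof (cases "k - j = 1")
            case True
            then have "j + 1 = k" using j by auto
            then show ?thesis using 4 Mz[of k] by auto
          next
            case False
            show ?thesis
            proof (cases "k - j = 2")
              case True
              then have "j + 1 = k - 1" using j 4 by auto
              then show ?thesis using 4 Mz[of "k - 1"] by auto
            next
              case False2: False
              have "k - j \<noteq> n" using 4 by auto
              then show ?thesis using False False2 Mz[of "k - j"] by auto
            qed
          qed
          then show "(\<Sum>i\<in>{0..<k - j}. T k j i w u) = 0"
            by (intro sum.neutral ballI Tz)
        qed
      next
        case 5
        have "(\<Sum>j\<in>{0..<k}. \<Sum>i\<in>{0..<k - j}. T k j i w u) =
              (\<Sum>j\<in>{0, k - 1}. \<Sum>i\<in>{0..<k - j}. T k j i w u)"
        proof (rule sum.mono_neutral_right)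
          show "\<forall>j\<in>{0..<k} - {0, k - 1}. (\<Sum>i\<in>{0..<k - j}. T k j i w u) = 0"
          proof
            fix j assume j: "j \<in> {0..<k} - {0, k - 1}"
            have "M (k - j) = lzero \<or> M (j + 1) = lzero"
            proof (cases "k - j = 2")
              case True
              then have "j + 1 = k - 1" using j 5 by auto
              then show ?thesis using 5 Mz[of "k - 1"] by auto
            next
              case False
              have "k - j \<noteq> n" "k - j \<noteq> 1" using 5 j by auto
              then show ?thesis using False Mz[of "k - j"] by auto
            qed
            then show "(\<Sum>i\<in>{0..<k - j}. T k j i w u) = 0"
              by (intro sum.neutral ballI Tz)
          qed
        qed (use 5 in auto)
        also have "\<dots> = (\<Sum>i\<in>{0..<k}. T k 0 i w u) + (\<Sum>i\<in>{0..<k - (k - 1)}. T k (k - 1) i w u)"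
          using 5 by simp
        also have "\<dots> = lcomp mun (d_k deg d n) w u + ksign (int n - 1) * lcomp d mun w u"
        proof -
          have gl: "(\<Sum>i\<in>{0..<k - (k - 1)}. T k (k - 1) i w u) = ksign (int k - 1) * lcomp d (M k) w u"
            using Glast 5 by auto
          show ?thesis unfolding G0 gl using 5 Mn by simp
        qed
        also have "\<dots> = 0" by (rule Hn')
        finally show ?thesis .
      qed
    qed
    finally show "lsum {0..<k} (\<lambda>j. lsum {0..<k - j} (\<lambda>i. lscale (ksign (int j * (int i + 1)))
            (lcomp (M (k - j)) (place deg i (k - j - 1 - i) (M (j + 1)) (j + 1) 1 (1 - int j))))) w u = lzero w u"
      by simp
  qed
  show ?thesis unfolding An_algebra_def using hd hmu hmun rel unfolding M_def by blast
qed



lemma fps_const_sum: "fps_const (sum f S) = (\<Sum>x\<in>S. fps_const (f x))"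
  by (induct S rule: infinite_finite_induct) (auto simp: fps_const_add[symmetric])

lemma T_ksign: "fps_const (ksign k :: 'k::field) = ksign k"
  by (simp add: ksign_def fps_const_neg[symmetric])

lemma T_lzero: "text_ext lzero = lzero" by (simp add: text_ext_def lzero_def fun_eq_iff)
lemma T_ladd: "text_ext (ladd f g) = ladd (text_ext f) (text_ext g)"
  by (simp add: text_ext_def ladd_def fun_eq_iff)
lemma T_lsub: "text_ext (lsub f g) = lsub (text_ext f) (text_ext g)"
  by (simp add: text_ext_def lsub_def fun_eq_iff)
lemma T_lscale_ksign: "text_ext (lscale (ksign k) f) = lscale (ksign k) (text_ext f)"
  by (simp add: text_ext_def lscale_def fun_eq_iff T_ksign[symmetric])
lemma T_lcomp: "text_ext (lcomp g f) = lcomp (text_ext g) (text_ext f)"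
  by (simp add: text_ext_def lcomp_def fun_eq_iff fps_const_sum)
lemma T_ltens: "text_ext (ltens deg a b g q h) = ltens deg a b (text_ext g) q (text_ext h)"
  by (simp add: text_ext_def ltens_def fun_eq_iff T_ksign[symmetric])
lemma T_idm: "text_ext (idm m) = idm m"
  by (simp add: text_ext_def idm_def fun_eq_iff)
lemma T_lsum: "text_ext (lsum I F) = lsum I (\<lambda>i. text_ext (F i))"
  by (simp add: text_ext_def lsum_def fun_eq_iff fps_const_sum)
lemma T_place: "text_ext (place deg l m g a b q) = place deg l m (text_ext g) a b q"
  by (simp add: place_def T_ltens T_idm)
lemma T_d_k: "text_ext (d_k deg d k) = d_k deg (text_ext d) k"
  by (simp add: d_k_def T_lsum T_place)
lemma T_tpow: "text_ext (tpow deg a b g m) = tpow deg a b (text_ext g) m"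
  by (induct m) (simp_all add: T_ltens T_idm)
lemma T_sigma: "text_ext (sigma deg r s) = sigma deg r s"
  by (simp add: text_ext_def sigma_def permap_def fun_eq_iff T_ksign[symmetric])
lemma T_muL: "text_ext (muL deg mu m) = muL deg (text_ext mu) m"
  apply (induct deg mu m rule: muL.induct)
    apply (simp add: text_ext_def lzero_def)
   apply (simp add: T_idm)
  apply (simp add: T_lcomp T_ltens T_idm)
  done
lemma T_muR: "text_ext (muR deg mu m) = muR deg (text_ext mu) m"
  apply (induct deg mu m rule: muR.induct)
    apply (simp add: text_ext_def lzero_def)
   apply (simp add: T_idm)
  apply (simp add: T_lcomp T_ltens T_idm)
  done
lemma is_hom_T: "is_hom deg p a b f \<Longrightarrow> is_hom deg p a b (text_ext f)"
  by (simp add: is_hom_def text_ext_def)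

lemmas Tsimps = T_lzero T_ladd T_lsub T_lscale_ksign T_lcomp T_ltens T_idm T_lsum T_place T_d_k
  T_tpow T_sigma T_muL T_muR

lemma lcomp_lscale_right:
  fixes c :: "'a::idom"
  assumes "c \<noteq> 0" shows "lcomp g (lscale c f) = lscale c (lcomp g f)"
  using assms by (simp add: lcomp_def lscale_def fun_eq_iff sum_distrib_left mult.assoc)
lemma lcomp_lscale_left: "lcomp (lscale c g) f = lscale c (lcomp g f)"
  by (simp add: lcomp_def lscale_def fun_eq_iff sum_distrib_left mult_ac)
lemma ltens_lscale1: "ltens deg a b (lscale c g) q h = lscale c (ltens deg a b g q h)"
  by (simp add: ltens_def lscale_def fun_eq_iff mult_ac)
lemma ltens_lscale2: "ltens deg a b g q (lscale c h) = lscale c (ltens deg a b g q h)"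
  by (simp add: ltens_def lscale_def fun_eq_iff mult_ac)
lemma ladd_lscale: "ladd (lscale c f) (lscale c g) = lscale c (ladd f g)"
  by (simp add: ladd_def lscale_def fun_eq_iff algebra_simps)
lemma lscale_comm: "lscale a (lscale b f) = lscale b (lscale a f)"
  by (simp add: lscale_def fun_eq_iff mult_ac)
lemma is_hom_lscale:
  fixes c :: "'a::idom"
  assumes "c \<noteq> 0" "is_hom deg p i j f" shows "is_hom deg p i j (lscale c f)"
  using assms by (simp add: is_hom_def lscale_def)



lemma is_hom_lzero: "is_hom deg p i j lzero" by (simp add: is_hom_def lzero_def)

lemma lscale_ksign_X: "lscale (ksign k) (lscale fps_X F) = lscale fps_X (lscale (ksign k) F)"
  by (simp add: lscale_def fun_eq_iff mult_ac)

theorem mainTheorem1: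
  fixes deg :: "'b \<Rightarrow> int"
    and d mu Delta mu1n :: "('b, 'k::field) lmap"
    and n :: nat
  assumes "n \<ge> 3"
    and "connected_dg_bialgebra deg d mu Delta"
    and "is_hom deg (2 - int n) n 1 mu1n"
    and "is_GS_2cocycle deg d mu Delta (single_cochain (2 - int n) n 1 mu1n)"
  shows "linear_deformation_hopf_An deg n
           (text_ext d) (text_ext mu) (text_ext Delta) lzero
           (text_ext d) (text_ext mu) (text_ext Delta) (\<lambda>w u. fps_X * fps_const (mu1n w u))"
proof -
  note n = assms(1) and hf = assms(3) and cc = assms(4)
  have bi: "dg_bialgebra deg d mu Delta" using assms(2) by (simp add: connected_dg_bialgebra_def)
  have hd: "is_hom deg 1 1 1 d" and hmu: "is_hom deg 0 2 1 mu" and hDe: "is_hom deg 0 1 2 Delta"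
    and dd: "lcomp d d = lzero"
    and assoc: "lcomp mu (ltens deg 2 1 mu 0 (idm 1)) = lcomp mu (ltens deg 1 1 (idm 1) 0 mu)"
    and coassoc: "lcomp (ltens deg 1 2 Delta 0 (idm 1)) Delta = lcomp (ltens deg 1 1 (idm 1) 0 Delta) Delta"
    and dmu: "lcomp d mu = lcomp mu (d_k deg d 2)"
    and Dd: "lcomp Delta d = lcomp (d_k deg d 2) Delta"
    using bi unfolding dg_bialgebra_def by blast+
  have hopfb: "lcomp Delta mu1n = lcomp (ladd (ltens deg n 1 (muL deg mu n) (2 - int n) mu1n) (ltens deg n 1 mu1n 0 (muR deg mu n)))
             (lcomp (sigma deg 2 n) (tpow deg 1 2 Delta n))"
    by (rule hopf_base[OF n cc hf hmu hDe assoc])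
  have cd: "lcomp d mu1n = lscale (ksign (2 - int n)) (lcomp mu1n (d_k deg d n))"
    using cocycle_d[OF n cc] d_k1[OF hd] by simp
  have ks: "ksign (int n - 1) * ksign (2 - int n) = (-1 :: 'k)"
    using ksign_add[of "int n - 1" "2 - int n", where 'r='k] by simp
  have Hnb: "ladd (lcomp mu1n (d_k deg d n)) (lscale (ksign (int n - 1)) (lcomp d mu1n)) = lzero"
  proof (intro ext)
    fix w u
    have "lcomp mu1n (d_k deg d n) w u + ksign (int n - 1) * (ksign (2 - int n) * lcomp mu1n (d_k deg d n) w u) = 0"
      by (simp add: mult.assoc[symmetric] ks)
    then show "ladd (lcomp mu1n (d_k deg d n)) (lscale (ksign (int n - 1)) (lcomp d mu1n)) w u = lzero w u"
      by (simp add: cd ladd_def lscale_def)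
  qed
  have Thd: "is_hom deg 1 1 1 (text_ext d)" by (rule is_hom_T[OF hd])
  have Thmu: "is_hom deg 0 2 1 (text_ext mu)" by (rule is_hom_T[OF hmu])
  have ThDe: "is_hom deg 0 1 2 (text_ext Delta)" by (rule is_hom_T[OF hDe])
  have Tdd: "lcomp (text_ext d) (text_ext d) = lzero"
    using arg_cong[of _ _ text_ext, OF dd] by (simp add: Tsimps)
  have Tassoc: "lcomp (text_ext mu) (ltens deg 2 1 (text_ext mu) 0 (idm 1)) = lcomp (text_ext mu) (ltens deg 1 1 (idm 1) 0 (text_ext mu))"
    using arg_cong[of _ _ text_ext, OF assoc] by (simp add: Tsimps)
  have Tcoassoc: "lcomp (ltens deg 1 2 (text_ext Delta) 0 (idm 1)) (text_ext Delta) = lcomp (ltens deg 1 1 (idm 1) 0 (text_ext Delta)) (text_ext Delta)"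
    using arg_cong[of _ _ text_ext, OF coassoc] by (simp add: Tsimps)
  have Tdmu: "lcomp (text_ext d) (text_ext mu) = lcomp (text_ext mu) (d_k deg (text_ext d) 2)"
    using arg_cong[of _ _ text_ext, OF dmu] by (simp add: Tsimps)
  have TDd: "lcomp (text_ext Delta) (text_ext d) = lcomp (d_k deg (text_ext d) 2) (text_ext Delta)"
    using arg_cong[of _ _ text_ext, OF Dd] by (simp add: Tsimps)
  have coal: "dg_coalgebra deg (text_ext d) (text_ext Delta)"
    unfolding dg_coalgebra_def using Thd ThDe Tdd Tcoassoc TDd by blast
  have hopf0: "hopf_An deg n (text_ext d) (text_ext mu) (text_ext Delta) lzero"
    unfolding hopf_An_def
  proof (intro conjI)
    show "An_algebra deg n (text_ext d) (text_ext mu) lzero"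
      by (rule An_generic[OF n Thd Thmu is_hom_lzero Tdd Tdmu Tassoc]) simp
  qed (use n coal in simp_all)
  have eqm: "(\<lambda>w u. fps_X * fps_const (mu1n w u)) = lscale fps_X (text_ext mu1n)"
    by (simp add: lscale_def text_ext_def)
  have X0: "(fps_X :: 'k fps) \<noteq> 0" by simp
  have hmt: "is_hom deg (2 - int n) n 1 (lscale fps_X (text_ext mu1n))"
    by (rule is_hom_lscale[OF X0 is_hom_T[OF hf]])
  have Hnt: "ladd (lcomp (lscale fps_X (text_ext mu1n)) (d_k deg (text_ext d) n))
      (lscale (ksign (int n - 1)) (lcomp (text_ext d) (lscale fps_X (text_ext mu1n)))) = lzero"
    using arg_cong[of _ _ "\<lambda>z. lscale fps_X (text_ext z)", OF Hnb]
    by (simp add: Tsimps lcomp_lscale_left lcomp_lscale_right[OF X0] lscale_ksign_X ladd_lscale)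
  have hopft: "lcomp (text_ext Delta) (lscale fps_X (text_ext mu1n)) =
     lcomp (ladd (ltens deg n 1 (muL deg (text_ext mu) n) (2 - int n) (lscale fps_X (text_ext mu1n)))
                 (ltens deg n 1 (lscale fps_X (text_ext mu1n)) 0 (muR deg (text_ext mu) n)))
           (lcomp (sigma deg 2 n) (tpow deg 1 2 (text_ext Delta) n))"
    using arg_cong[of _ _ "\<lambda>z. lscale fps_X (text_ext z)", OF hopfb]
    by (simp add: Tsimps lcomp_lscale_left lcomp_lscale_right[OF X0] ltens_lscale1 ltens_lscale2 ladd_lscale)
  have hopf1: "hopf_An deg n (text_ext d) (text_ext mu) (text_ext Delta) (lscale fps_X (text_ext mu1n))"
    unfolding hopf_An_def
  proof (intro conjI)
    show "An_algebra deg n (text_ext d) (text_ext mu) (lscale fps_X (text_ext mu1n))"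
      by (rule An_generic[OF n Thd Thmu hmt Tdd Tdmu Tassoc Hnt])
  qed (use n coal hopft in simp_all)
  show ?thesis
    unfolding linear_deformation_hopf_An_def eqm
    using hopf0 hopf1
    by (simp add: lin_in_t_def reduces_to_def text_ext_def lscale_def lzero_def)
qed

end
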